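(* Let $\lambda\ge 0$ and $\lambda_1,\dots,\lambda_M>0$. Suppose $g_1,\dots,g_M$ are $C^1$ functions on $[0,P)\times[0,\infty)$ (for some $P>0$), and write $t(p,v)=\sum_{\gamma=1}^M g_\gamma(p,v)$. Assume they satisfy: - $\lambda+t(p,v)>0$ on the whole domain; - the system of PDEs $$\frac{\partial g_\rho}{\partial p}(p,v)=\frac{1}{\lambda+t(p,v)}\,\frac{\partial g_\rho}{\partial v}(p,v),\qquad \rho=1,\dots,M;$$ - the initial conditions $g_\rho(0,v)=\big(\tfrac{1}{\lambda_\rho}+v\big)^{-1}$. Then for all $(p,v)$ in the domain and all $\rho$, $$g_\rho(p,v)=\Big(\frac{1}{\lambda_\rho}+v+\frac{p}{\lambda+\sum_{\gamma=1}^M g_\gamma(p,v)}\Big)^{-1}.$$ In particular, $$t(p,v)=\sum_\rho\Big(\tfrac{1}{\lambda_\rho}+v+\tfrac{p}{\lambda+t(p,v)}\Big)^{-1}.$$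
   Context: This PDE is the continuous approximation to the dataset-averaged diagonal entries $g_\rho(p,v)=\langle\tilde{\mathbf{G}}(p,v)_{\rho\rho}\rangle$, where $$\tilde{\mathbf{G}}(p,v)=\Big(\tfrac{1}{\lambda}\mathbf{\Phi}\mathbf{\Phi}^\top+\mathbf{\Lambda}^{-1}+v\mathbf{I}\Big)^{-1},$$ $\mathbf{\Phi}$ is the $M\times p$ matrix of kernel eigenfunctions evaluated at $p$ samples, and $\mathbf{\Lambda}={\rm diag}(\lambda_\rho)$. The number of samples $p$ is treated as a continuous variable. *)

theory Defs
  imports "HOL-Analysis.Analysis"
begin

end

theory Submission
  imports Defs
begin

theorem proposition2:
  fixes M :: nat and lam P :: real
    and lams :: "nat \<Rightarrow> real"
    and g gp gv :: "nat \<Rightarrow> real \<times> real \<Rightarrow> real"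
  defines "D \<equiv> {0..<P} \<times> {0..}"
  assumes lam_nonneg: "lam \<ge> 0"
    and lams_pos: "\<And>\<rho>. \<rho> \<in> {1..M} \<Longrightarrow> lams \<rho> > 0"
    and P_pos: "P > 0"
    and deriv: "\<And>\<rho> z. \<rho> \<in> {1..M} \<Longrightarrow> z \<in> D \<Longrightarrow>
        (g \<rho> has_derivative (\<lambda>h. fst h * gp \<rho> z + snd h * gv \<rho> z)) (at z within D)"
    and cont_p: "\<And>\<rho>. \<rho> \<in> {1..M} \<Longrightarrow> continuous_on D (gp \<rho>)"
    and cont_v: "\<And>\<rho>. \<rho> \<in> {1..M} \<Longrightarrow> continuous_on D (gv \<rho>)"
    and denom_pos: "\<And>z. z \<in> D \<Longrightarrow> lam + (\<Sum>\<gamma>=1..M. g \<gamma> z) > 0"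
    and pde: "\<And>\<rho> z. \<rho> \<in> {1..M} \<Longrightarrow> z \<in> D \<Longrightarrow>
        gp \<rho> z = gv \<rho> z / (lam + (\<Sum>\<gamma>=1..M. g \<gamma> z))"
    and init: "\<And>\<rho> v. \<rho> \<in> {1..M} \<Longrightarrow> v \<ge> 0 \<Longrightarrow>
        g \<rho> (0, v) = inverse (1 / lams \<rho> + v)"
  shows "(\<forall>z\<in>D. \<forall>\<rho>\<in>{1..M}.
            g \<rho> z = inverse (1 / lams \<rho> + snd z + fst z / (lam + (\<Sum>\<gamma>=1..M. g \<gamma> z))))
       \<and> (\<forall>z\<in>D. (\<Sum>\<gamma>=1..M. g \<gamma> z) =
            (\<Sum>\<rho>=1..M. inverse (1 / lams \<rho> + snd z + fst z / (lam + (\<Sum>\<gamma>=1..M. g \<gamma> z)))))"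
proof -
  have main: "g \<rho> (p1, v1) = inverse (1 / lams \<rho> + v1 + p1 / (lam + (\<Sum>\<gamma>=1..M. g \<gamma> (p1, v1))))"
    if z: "(p1, v1) \<in> D" and r: "\<rho> \<in> {1..M}" for p1 v1 \<rho>
  proof -
    define S where "S z = lam + (\<Sum>\<gamma>=1..M. g \<gamma> z)" for z
    define s1 where "s1 = S (p1, v1)"
    have p1: "0 \<le> p1" "p1 < P" and v1: "0 \<le> v1" using z by (auto simp: D_def)
    have s1: "s1 > 0" using denom_pos[OF z] by (simp add: s1_def S_def)
    define L where "L q = (q, v1 + (p1 - q) / s1)" for q
    have LD: "L q \<in> D" if "q \<in> {0..p1}" for q
      using that p1 v1 s1 by (auto simp: L_def D_def)
    have LDs: "L ` {0..p1} \<subseteq> D" using LD by auto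
    have Lder: "(L has_derivative (\<lambda>h. (h, - h / s1))) (at q within X)" for q X
      unfolding L_def using s1 by (auto intro!: derivative_eq_intros)
    have Spos: "S (L q) > 0" if "q \<in> {0..p1}" for q
      using denom_pos[OF LD[OF that]] by (simp add: S_def)
    have fder: "((\<lambda>q. g \<gamma> (L q)) has_derivative
        (\<lambda>h. h * (gv \<gamma> (L q) * (1 / S (L q) - 1 / s1)))) (at q within {0..p1})"
      if "\<gamma> \<in> {1..M}" "q \<in> {0..p1}" for \<gamma> q
    proof -
      have "((\<lambda>q. g \<gamma> (L q)) has_derivative
          (\<lambda>y. fst (y, - y / s1) * gp \<gamma> (L q) + snd (y, - y / s1) * gv \<gamma> (L q))) (at q within {0..p1})"
        by (rule has_derivative_in_compose2[OF deriv[OF that(1)] LDs that(2) Lder])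
      moreover have "gp \<gamma> (L q) = gv \<gamma> (L q) / S (L q)"
        using pde[OF that(1) LD[OF that(2)]] by (simp add: S_def)
      ultimately show ?thesis
        by (simp add: algebra_simps divide_inverse)
    qed
    define A where "A q = (\<Sum>\<gamma>=1..M. gv \<gamma> (L q))" for q
    define u where "u q = S (L q) - s1" for q
    have uder: "(u has_derivative (\<lambda>h. h * (A q * (1 / S (L q) - 1 / s1)))) (at q within {0..p1})"
      if "q \<in> {0..p1}" for q
    proof -
      have D1: "((\<lambda>q. lam + (\<Sum>\<gamma>=1..M. g \<gamma> (L q)) - s1) has_derivative
          (\<lambda>h. 0 + (\<Sum>\<gamma>=1..M. h * (gv \<gamma> (L q) * (1 / S (L q) - 1 / s1))) - 0)) (at q within {0..p1})"
        by (intro has_derivative_diff has_derivative_add has_derivative_const has_derivative_sum fder that) auto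
      have ueq: "u = (\<lambda>q. lam + (\<Sum>\<gamma>=1..M. g \<gamma> (L q)) - s1)"
        by (simp add: fun_eq_iff u_def S_def)
      show ?thesis
        unfolding ueq by (rule has_derivative_eq_rhs[OF D1]) (simp add: fun_eq_iff A_def sum_distrib_left sum_distrib_right mult.assoc)
    qed
    define a where "a q = A q / (S (L q) * s1)" for q
    have u_rel: "A q * (1 / S (L q) - 1 / s1) = - a q * u q" if "q \<in> {0..p1}" for q
      using Spos[OF that] s1 by (simp add: a_def u_def field_simps)
    have gcont: "continuous_on D (g \<gamma>)" if "\<gamma> \<in> {1..M}" for \<gamma>
      using deriv[OF that] has_derivative_continuous continuous_on_eq_continuous_within by blast
    have Lcont: "continuous_on {0..p1} L" unfolding L_def using s1 by (intro continuous_intros) auto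
    have compc: "continuous_on {0..p1} (\<lambda>q. f (L q))" if "continuous_on D f" for f
      using continuous_on_compose[OF Lcont continuous_on_subset[OF that LDs]] by (simp add: o_def)
    have acont: "continuous_on {0..p1} a"
      unfolding a_def A_def S_def
      apply (intro continuous_intros compc cont_v gcont)
      using Spos s1 by (force simp: S_def)+
    have "compact (a ` {0..p1})" by (intro compact_continuous_image acont) simp
    then obtain K where K: "\<And>q. q \<in> {0..p1} \<Longrightarrow> norm (a q) \<le> K"
      using compact_imp_bounded bounded_iff by (metis imageI)
    define w where "w q = exp (2 * K * q) * (u q)\<^sup>2" for q
    have wder: "(w has_derivative (\<lambda>h. h * (exp (2 * K * q) * 2 * (u q)\<^sup>2 * (K - a q)))) (at q within {0..p1})"
      if "q \<in> {0..p1}" for q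
    proof -
      have ud: "(u has_derivative (\<lambda>h. h * (- a q * u q))) (at q within {0..p1})"
        using uder[OF that] u_rel[OF that] by simp
      have "(w has_derivative (\<lambda>h. exp (2 * K * q) * (2 * K * h) * (u q)\<^sup>2 +
          exp (2 * K * q) * (2 * u q * (h * (- a q * u q))))) (at q within {0..p1})"
        unfolding w_def
        by (auto intro!: derivative_eq_intros ud simp: power2_eq_square algebra_simps)
      then show ?thesis
        by (rule has_derivative_eq_rhs) (auto simp: power2_eq_square algebra_simps fun_eq_iff)
    qed
    have u0: "u q = 0" if q: "q \<in> {0..p1}" for q
    proof -
      have "\<exists>x\<in>{q..p1}. w p1 - w q = (p1 - q) * (exp (2 * K * x) * 2 * (u x)\<^sup>2 * (K - a x))"
        apply (rule mvt_very_simple)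
        using q apply simp
        apply (rule has_derivative_subset[OF wder])
        using q by auto
      then obtain x where x: "x \<in> {q..p1}"
        and eq: "w p1 - w q = (p1 - q) * (exp (2 * K * x) * 2 * (u x)\<^sup>2 * (K - a x))" by blast
      have "K - a x \<ge> 0" using K[of x] x q by auto
      then have "w p1 - w q \<ge> 0" unfolding eq using x by (intro mult_nonneg_nonneg) auto
      moreover have "w p1 = 0" by (simp add: w_def u_def L_def s1_def)
      moreover have "w q \<ge> 0" by (simp add: w_def)
      ultimately have "w q = 0" by linarith
      then show ?thesis by (simp add: w_def)
    qed
    have "\<exists>c. \<forall>q\<in>{0..p1}. g \<rho> (L q) = c"
    proof (rule has_derivative_zero_constant)
      fix q assume q: "q \<in> {0..p1}"
      have "S (L q) = s1" using u0[OF q] by (simp add: u_def)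
      then show "((\<lambda>q. g \<rho> (L q)) has_derivative (\<lambda>h. 0)) (at q within {0..p1})"
        using fder[OF r q] by simp
    qed simp
    then have "g \<rho> (L p1) = g \<rho> (L 0)" using p1 by force
    moreover have "L p1 = (p1, v1)" by (simp add: L_def)
    moreover have "L 0 = (0, v1 + p1 / s1)" by (simp add: L_def)
    moreover have "g \<rho> (0, v1 + p1 / s1) = inverse (1 / lams \<rho> + (v1 + p1 / s1))"
      using init[OF r] v1 p1 s1 by simp
    ultimately show ?thesis by (simp add: s1_def S_def add.assoc)
  qed
  have A: "\<forall>z\<in>D. \<forall>\<rho>\<in>{1..M}.
            g \<rho> z = inverse (1 / lams \<rho> + snd z + fst z / (lam + (\<Sum>\<gamma>=1..M. g \<gamma> z)))"
    using main by auto
  then show ?thesis by auto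
qed

end
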